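(* In the standing setting, if a robust $\boldsymbol b$-flow exists, then there exists an optimal robust $\boldsymbol b$-flow $\boldsymbol f=(f^1,f^2)$ with $f^2(a)\ge f^1(a)$ for all arcs $a\in A$.
   Context: A RobMCF instance $(G,u,c,\boldsymbol b)$ consists of a finite directed graph (parallel arcs allowed) $G=(V,A)$ whose arc set is partitioned as $A=A^{\mathrm{fix}}\cup A^{\mathrm{free}}$ into fixed and free arcs, capacities $u:A\to\mathbb Z_{\ge0}$, costs $c:A\to\mathbb Z_{\ge0}$, a finite nonempty set of scenarios $\Lambda$, and balances $b^\lambda:V\to\mathbb Z$ with $\sum_{v}b^\lambda(v)=0$. A $b^\lambda$-flow is a function $f^\lambda:A\to\mathbb Z_{\ge0}$ with $f^\lambda(a)\le u(a)$ for all $a$ and $\sum_{a=(v,w)\in A}f^\lambda(a)-\sum_{a=(w,v)\in A}f^\lambda(a)=b^\lambda(v)$ for all $v\in V$; its cost is $c(f^\lambda)=\sum_a c(a)f^\lambda(a)$. A robust $\boldsymbol b$-flow is a tuple $(f^\lambda)_{\lambda\in\Lambda}$ of $b^\lambda$-flows with $f^\lambda(a)=f^{\lambda'}(a)$ for all $a\in A^{\mathrm{fix}}$, $\lambda,\lambda'\in\Lambda$; its cost is $\max_\lambda c(f^\lambda)$; it is optimal if of minimum cost. Series-parallel (SP) digraphs are defined recursively: a single arc $(o,q)$ is an SP digraph with origin $o$ and target $q$; if $G_1$ (origin $o_1$, target $q_1$) and $G_2$ (origin $o_2$, target $q_2$) are SP digraphs, then their series composition (identify $q_1$ with $o_2$;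 origin $o_1$, target $q_2$) and their parallel composition (identify $o_1$ with $o_2$ to form the origin and $q_1$ with $q_2$ to form the target) are SP digraphs. Standing setting: $G$ is an SP digraph with origin $o$ and target $q$, $\Lambda=\{1,2\}$, and there are integers $0\le d^1\le d^2$ with $b^\lambda(o)=d^\lambda$, $b^\lambda(q)=-d^\lambda$ and $b^\lambda(v)=0$ for all other $v$ (unique source $o$, unique sink $q$). *)

theory Defs
  imports Main
begin

text \<open>A digraph with parallel arcs: a set of arc identifiers A (type 'e) with
tail and head maps into vertices (type 'v). The vertex set of an SP digraph is
the set of arc endpoints (SP digraphs have no isolated vertices).\<close>

definition verts :: "'e set \<Rightarrow> ('e \<Rightarrow> 'v) \<Rightarrow> ('e \<Rightarrow> 'v) \<Rightarrow> 'v set" where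
  "verts A tail head = tail ` A \<union> head ` A"

text \<open>Series-parallel digraphs with origin s and target t, built by gluing:
identification of vertices is realised by sharing vertex names, and the
components are otherwise vertex- and arc-disjoint.\<close>

inductive sp :: "('e \<Rightarrow> 'v) \<Rightarrow> ('e \<Rightarrow> 'v) \<Rightarrow> 'e set \<Rightarrow> 'v \<Rightarrow> 'v \<Rightarrow> bool"
  for tail :: "'e \<Rightarrow> 'v" and head :: "'e \<Rightarrow> 'v" where
  single: "tail a = s \<Longrightarrow> head a = t \<Longrightarrow> s \<noteq> t \<Longrightarrow> sp tail head {a} s t"
| series: "sp tail head A1 s m \<Longrightarrow> sp tail head A2 m t \<Longrightarrow> A1 \<inter> A2 = {} \<Longrightarrow>
     verts A1 tail head \<inter> verts A2 tail head = {m} \<Longrightarrow> sp tail head (A1 \<union> A2) s t"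
| parallel: "sp tail head A1 s t \<Longrightarrow> sp tail head A2 s t \<Longrightarrow> A1 \<inter> A2 = {} \<Longrightarrow>
     verts A1 tail head \<inter> verts A2 tail head = {s, t} \<Longrightarrow> sp tail head (A1 \<union> A2) s t"

definition is_flow :: "'e set \<Rightarrow> ('e \<Rightarrow> 'v) \<Rightarrow> ('e \<Rightarrow> 'v) \<Rightarrow> ('e \<Rightarrow> nat) \<Rightarrow>
    ('v \<Rightarrow> int) \<Rightarrow> ('e \<Rightarrow> nat) \<Rightarrow> bool" where
  "is_flow A tail head u b f \<longleftrightarrow>
     (\<forall>a\<in>A. f a \<le> u a) \<and>
     (\<forall>v\<in>verts A tail head.
        (\<Sum>a\<in>{a\<in>A. tail a = v}. int (f a)) - (\<Sum>a\<in>{a\<in>A. head a = v}. int (f a)) = b v)"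

definition flow_cost :: "'e set \<Rightarrow> ('e \<Rightarrow> nat) \<Rightarrow> ('e \<Rightarrow> nat) \<Rightarrow> nat" where
  "flow_cost A c f = (\<Sum>a\<in>A. c a * f a)"

definition robust_flow :: "'e set \<Rightarrow> 'e set \<Rightarrow> ('e \<Rightarrow> 'v) \<Rightarrow> ('e \<Rightarrow> 'v) \<Rightarrow> ('e \<Rightarrow> nat) \<Rightarrow>
    ('v \<Rightarrow> int) \<Rightarrow> ('v \<Rightarrow> int) \<Rightarrow> ('e \<Rightarrow> nat) \<Rightarrow> ('e \<Rightarrow> nat) \<Rightarrow> bool" where
  "robust_flow A Afix tail head u b1 b2 f1 f2 \<longleftrightarrow>
     is_flow A tail head u b1 f1 \<and> is_flow A tail head u b2 f2 \<and> (\<forall>a\<in>Afix. f1 a = f2 a)"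

definition robust_cost :: "'e set \<Rightarrow> ('e \<Rightarrow> nat) \<Rightarrow> ('e \<Rightarrow> nat) \<Rightarrow> ('e \<Rightarrow> nat) \<Rightarrow> nat" where
  "robust_cost A c f1 f2 = max (flow_cost A c f1) (flow_cost A c f2)"

definition optimal_robust_flow :: "'e set \<Rightarrow> 'e set \<Rightarrow> ('e \<Rightarrow> 'v) \<Rightarrow> ('e \<Rightarrow> 'v) \<Rightarrow>
    ('e \<Rightarrow> nat) \<Rightarrow> ('e \<Rightarrow> nat) \<Rightarrow> ('v \<Rightarrow> int) \<Rightarrow> ('v \<Rightarrow> int) \<Rightarrow> ('e \<Rightarrow> nat) \<Rightarrow> ('e \<Rightarrow> nat) \<Rightarrow> bool" where
  "optimal_robust_flow A Afix tail head u c b1 b2 f1 f2 \<longleftrightarrow>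
     robust_flow A Afix tail head u b1 b2 f1 f2 \<and>
     (\<forall>g1 g2. robust_flow A Afix tail head u b1 b2 g1 g2 \<longrightarrow>
        robust_cost A c f1 f2 \<le> robust_cost A c g1 g2)"

definition st_balance :: "'v \<Rightarrow> 'v \<Rightarrow> nat \<Rightarrow> 'v \<Rightarrow> int" where
  "st_balance s t d v = (if v = s then int d else if v = t then - int d else 0)"

end

theory Submission imports Defs begin

context
  fixes tail head :: "'e \<Rightarrow> 'v"
begin

definition dv :: "'e set \<Rightarrow> ('e \<Rightarrow> nat) \<Rightarrow> 'v \<Rightarrow> int" where
  "dv A f v = (\<Sum>a\<in>{a\<in>A. tail a = v}. int (f a)) - (\<Sum>a\<in>{a\<in>A. head a = v}. int (f a))"

definition cons :: "'e set \<Rightarrow> ('v \<Rightarrow> int) \<Rightarrow> ('e \<Rightarrow> nat) \<Rightarrow> bool" where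
  "cons A b f \<longleftrightarrow> (\<forall>v\<in>verts A tail head. dv A f v = b v)"

definition outf :: "'e set \<Rightarrow> ('e \<Rightarrow> nat) \<Rightarrow> 'v \<Rightarrow> nat" where
  "outf A f v = (\<Sum>a\<in>{a\<in>A. tail a = v}. f a)"

lemma is_flow_cons: "is_flow A tail head u b f \<longleftrightarrow> (\<forall>a\<in>A. f a \<le> u a) \<and> cons A b f"
  unfolding is_flow_def cons_def dv_def by simp

lemma verts_union: "verts (A1 \<union> A2) tail head = verts A1 tail head \<union> verts A2 tail head"
  by (auto simp: verts_def)

lemma sp_props:
  assumes "sp tail head A s t"
  shows "finite A \<and> s \<noteq> t \<and> s \<in> verts A tail head \<and> t \<in> verts A tail head
     \<and> (\<forall>a\<in>A. head a \<noteq> s) \<and> (\<forall>a\<in>A. tail a \<noteq> t)"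
  using assms
proof induction
  case (single a s t)
  then show ?case by (auto simp: verts_def)
next
  case (series A1 s m A2 t)
  have a: "finite A1" "s \<noteq> m" "s \<in> verts A1 tail head" "m \<in> verts A1 tail head"
    "\<forall>a\<in>A1. head a \<noteq> s" "\<forall>a\<in>A1. tail a \<noteq> m" using series.IH(1) by auto
  have b: "finite A2" "m \<noteq> t" "m \<in> verts A2 tail head" "t \<in> verts A2 tail head"
    "\<forall>a\<in>A2. head a \<noteq> m" "\<forall>a\<in>A2. tail a \<noteq> t" using series.IH(2) by auto
  have sn: "s \<notin> verts A2 tail head"
  proof
    assume "s \<in> verts A2 tail head"
    with a(3) have "s \<in> verts A1 tail head \<inter> verts A2 tail head" by (rule IntI)
    with series.hyps(4) a(2) show False by simp
  qed
  have tn: "t \<notin> verts A1 tail head"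
  proof
    assume "t \<in> verts A1 tail head"
    with b(4) have "t \<in> verts A1 tail head \<inter> verts A2 tail head" by blast
    with series.hyps(4) b(2) show False by simp
  qed
  have "s \<noteq> t" using a(3) tn by metis
  moreover have "\<forall>a\<in>A2. head a \<noteq> s" using sn by (auto simp: verts_def)
  moreover have "\<forall>a\<in>A1. tail a \<noteq> t" using tn by (auto simp: verts_def)
  ultimately show ?case using a b by (auto simp: verts_union)
next
  case (parallel A1 s t A2)
  then show ?case using parallel.IH by (auto simp: verts_union)
qed

lemma series_out:
  assumes s1: "sp tail head A1 s m" and s2: "sp tail head A2 m t"
    and vi: "verts A1 tail head \<inter> verts A2 tail head = {m}"
  shows "s \<notin> verts A2 tail head \<and> t \<notin> verts A1 tail head"
proof -
  have a: "s \<noteq> m" "s \<in> verts A1 tail head" using sp_props[OF s1] by auto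
  have b: "m \<noteq> t" "t \<in> verts A2 tail head" using sp_props[OF s2] by auto
  have "s \<notin> verts A2 tail head"
  proof
    assume "s \<in> verts A2 tail head"
    with a(2) have "s \<in> verts A1 tail head \<inter> verts A2 tail head" by (rule IntI)
    with vi a(1) show False by simp
  qed
  moreover have "t \<notin> verts A1 tail head"
  proof
    assume "t \<in> verts A1 tail head"
    then have "t \<in> verts A1 tail head \<inter> verts A2 tail head" using b(2) by (rule IntI)
    with vi b(1) show False by simp
  qed
  ultimately show ?thesis by simp
qed

lemma dv_union: "finite A1 \<Longrightarrow> finite A2 \<Longrightarrow> A1 \<inter> A2 = {} \<Longrightarrow>
   dv (A1 \<union> A2) f v = dv A1 f v + dv A2 f v"
proof -
  assume f: "finite A1" "finite A2" and d: "A1 \<inter> A2 = {}"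
  have e1: "{a\<in>A1 \<union> A2. tail a = v} = {a\<in>A1. tail a = v} \<union> {a\<in>A2. tail a = v}" by auto
  have e2: "{a\<in>A1 \<union> A2. head a = v} = {a\<in>A1. head a = v} \<union> {a\<in>A2. head a = v}" by auto
  show ?thesis unfolding dv_def e1 e2
    by (subst sum.union_disjoint, use f d in auto)+
qed

lemma dv_cong: "(\<And>a. a \<in> A \<Longrightarrow> f a = g a) \<Longrightarrow> dv A f v = dv A g v"
  unfolding dv_def by (intro arg_cong2[where f="(-)"] sum.cong) auto

lemma dv_notin: assumes "v \<notin> verts A tail head" shows "dv A f v = 0"
proof -
  have e1: "{a\<in>A. tail a = v} = {}" and e2: "{a\<in>A. head a = v} = {}" using assms by (auto simp: verts_def)
  show ?thesis unfolding dv_def e1 e2 by simp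
qed

lemma dv_sum_zero: assumes "finite A" shows "(\<Sum>v\<in>verts A tail head. dv A f v) = 0"
proof -
  have fv: "finite (verts A tail head)" using assms by (simp add: verts_def)
  have 1: "(\<Sum>v\<in>verts A tail head. \<Sum>a\<in>{a\<in>A. tail a = v}. int (f a)) = (\<Sum>a\<in>A. int (f a))"
    using sum.group[OF assms fv, of tail "\<lambda>a. int (f a)"] by (auto simp: verts_def)
  have 2: "(\<Sum>v\<in>verts A tail head. \<Sum>a\<in>{a\<in>A. head a = v}. int (f a)) = (\<Sum>a\<in>A. int (f a))"
    using sum.group[OF assms fv, of head "\<lambda>a. int (f a)"] by (auto simp: verts_def)
  show ?thesis unfolding dv_def sum_subtractf 1 2 by simp
qed

lemma dv_lin: "finite A \<Longrightarrow> (\<And>a. a \<in> A \<Longrightarrow> int (F a) = int (f a) + int (g a) - int (h a)) \<Longrightarrow>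
   dv A F v = dv A f v + dv A g v - dv A h v"
  unfolding dv_def by (simp add: sum.distrib sum_subtractf)


lemma cons_cong: "(\<And>a. a \<in> A \<Longrightarrow> f a = g a) \<Longrightarrow> cons A b f \<longleftrightarrow> cons A b g"
  unfolding cons_def using dv_cong by metis

lemma st_sum:
  assumes "finite V" "s \<noteq> t"
  shows "(\<Sum>v\<in>V. st_balance s t d v) = (if s \<in> V then int d else 0) - (if t \<in> V then int d else 0)"
proof -
  have "\<And>v. st_balance s t d v = (if v = s then int d else 0) - (if v = t then int d else 0)"
    using assms(2) by (simp add: st_balance_def)
  then have "(\<Sum>v\<in>V. st_balance s t d v) = (\<Sum>v\<in>V. (if v = s then int d else 0)) - (\<Sum>v\<in>V. (if v = t then int d else 0))"
    by (simp add: sum_subtractf)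
  also have "\<dots> = (if s \<in> V then int d else 0) - (if t \<in> V then int d else 0)"
    using assms(1) by (simp add: sum.delta')
  finally show ?thesis .
qed

lemma sp_value:
  assumes sp: "sp tail head A s t" and int0: "\<forall>v\<in>verts A tail head - {s,t}. dv A f v = 0"
  shows "cons A (st_balance s t (outf A f s)) f"
proof -
  note P = sp_props[OF sp]
  let ?V = "verts A tail head"
  have fV: "finite ?V" using P by (simp add: verts_def)
  have hs: "{a\<in>A. head a = s} = {}" using P by auto
  have ds: "dv A f s = int (outf A f s)" unfolding dv_def outf_def hs by simp
  have z: "(\<Sum>v\<in>?V - {s} - {t}. dv A f v) = 0" using int0 by (intro sum.neutral) auto
  have "0 = (\<Sum>v\<in>?V. dv A f v)" using dv_sum_zero P by simp
  also have "\<dots> = dv A f s + (\<Sum>v\<in>?V - {s}. dv A f v)" using P fV by (simp add: sum.remove)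
  also have "(\<Sum>v\<in>?V - {s}. dv A f v) = dv A f t + (\<Sum>v\<in>?V - {s} - {t}. dv A f v)"
    using P fV by (intro sum.remove) auto
  finally have dt: "dv A f t = - int (outf A f s)" using ds z by simp
  show ?thesis unfolding cons_def
  proof
    fix v assume v: "v \<in> ?V"
    show "dv A f v = st_balance s t (outf A f s) v"
      using v ds dt int0 P by (auto simp: st_balance_def)
  qed
qed

lemma dv_left: "finite A1 \<Longrightarrow> finite A2 \<Longrightarrow> A1 \<inter> A2 = {} \<Longrightarrow> v \<notin> verts A2 tail head \<Longrightarrow>
   dv (A1 \<union> A2) f v = dv A1 f v"
  using dv_union dv_notin by simp

lemma dv_right: "finite A1 \<Longrightarrow> finite A2 \<Longrightarrow> A1 \<inter> A2 = {} \<Longrightarrow> v \<notin> verts A1 tail head \<Longrightarrow>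
   dv (A1 \<union> A2) f v = dv A2 f v"
  using dv_union dv_notin by simp

lemma series_restrict:
  assumes s1: "sp tail head A1 s m" and s2: "sp tail head A2 m t" and dj: "A1 \<inter> A2 = {}"
    and vi: "verts A1 tail head \<inter> verts A2 tail head = {m}"
    and c: "cons (A1 \<union> A2) (st_balance s t d) f"
  shows "cons A1 (st_balance s m d) f \<and> cons A2 (st_balance m t d) f"
proof -
  note P1 = sp_props[OF s1] and P2 = sp_props[OF s2]
  have sn: "s \<notin> verts A2 tail head" and tn: "t \<notin> verts A1 tail head" using series_out[OF s1 s2 vi] by simp_all
  have c': "\<And>v. v \<in> verts A1 tail head \<union> verts A2 tail head \<Longrightarrow> dv (A1 \<union> A2) f v = st_balance s t d v"
    using c by (auto simp: cons_def verts_union)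
  have "cons A1 (st_balance s m (outf A1 f s)) f"
  proof (rule sp_value[OF s1], intro ballI)
    fix v assume v: "v \<in> verts A1 tail head - {s, m}"
    then have "v \<notin> verts A2 tail head" using vi by blast
    then show "dv A1 f v = 0" using c'[of v] v dv_left[of A1 A2 v f] P1 P2 dj tn
      by (auto simp: st_balance_def)
  qed
  moreover have "dv A1 f s = int d" using c'[of s] dv_left[of A1 A2 s f] P1 P2 dj sn
    by (auto simp: st_balance_def)
  ultimately have o1: "outf A1 f s = d" and C1: "cons A1 (st_balance s m d) f"
    using P1 unfolding cons_def by (auto simp: st_balance_def)
  have "cons A2 (st_balance m t (outf A2 f m)) f"
  proof (rule sp_value[OF s2], intro ballI)
    fix v assume v: "v \<in> verts A2 tail head - {m, t}"
    then have "v \<notin> verts A1 tail head" using vi by blast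
    then show "dv A2 f v = 0" using c'[of v] v dv_right[of A1 A2 v f] P1 P2 dj sn
      by (auto simp: st_balance_def)
  qed
  moreover have "dv A1 f m = - int d" using C1 P1 unfolding cons_def by (auto simp: st_balance_def)
  moreover have "dv (A1 \<union> A2) f m = 0" using c'[of m] P1 P2 sn tn by (auto simp: st_balance_def)
  ultimately have "cons A2 (st_balance m t (outf A2 f m)) f" "dv A2 f m = int d"
    using dv_union[of A1 A2 f m] P1 P2 dj by auto
  then have "cons A2 (st_balance m t d) f" using P2 unfolding cons_def by (auto simp: st_balance_def)
  with C1 show ?thesis by simp
qed

lemma parallel_restrict:
  assumes s1: "sp tail head A1 s t" and s2: "sp tail head A2 s t" and dj: "A1 \<inter> A2 = {}"
    and vi: "verts A1 tail head \<inter> verts A2 tail head = {s, t}"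
    and c: "cons (A1 \<union> A2) (st_balance s t d) f"
  shows "cons A1 (st_balance s t (outf A1 f s)) f \<and> cons A2 (st_balance s t (outf A2 f s)) f
    \<and> outf A1 f s + outf A2 f s = d"
proof -
  note P1 = sp_props[OF s1] and P2 = sp_props[OF s2]
  have c': "\<And>v. v \<in> verts A1 tail head \<union> verts A2 tail head \<Longrightarrow> dv (A1 \<union> A2) f v = st_balance s t d v"
    using c by (auto simp: cons_def verts_union)
  have C1: "cons A1 (st_balance s t (outf A1 f s)) f"
  proof (rule sp_value[OF s1], intro ballI)
    fix v assume v: "v \<in> verts A1 tail head - {s, t}"
    then have "v \<notin> verts A2 tail head" using vi by blast
    then show "dv A1 f v = 0" using c'[of v] v dv_left[of A1 A2 v f] P1 P2 dj
      by (auto simp: st_balance_def)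
  qed
  have C2: "cons A2 (st_balance s t (outf A2 f s)) f"
  proof (rule sp_value[OF s2], intro ballI)
    fix v assume v: "v \<in> verts A2 tail head - {s, t}"
    then have "v \<notin> verts A1 tail head" using vi by blast
    then show "dv A2 f v = 0" using c'[of v] v dv_right[of A1 A2 v f] P1 P2 dj
      by (auto simp: st_balance_def)
  qed
  have "dv A1 f s = int (outf A1 f s)" "dv A2 f s = int (outf A2 f s)"
    using C1 C2 P1 P2 unfolding cons_def by (auto simp: st_balance_def)
  moreover have "dv (A1 \<union> A2) f s = int d" using c'[of s] P1 by (auto simp: st_balance_def)
  ultimately have "outf A1 f s + outf A2 f s = d" using dv_union[of A1 A2 f s] P1 P2 dj by simp
  with C1 C2 show ?thesis by simp
qed

lemma dv_comb:
  assumes "finite A1" "finite A2" "A1 \<inter> A2 = {}"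
  shows "dv (A1 \<union> A2) (\<lambda>a. if a \<in> A1 then f a else g a) v = dv A1 f v + dv A2 g v"
proof -
  have "dv A1 (\<lambda>a. if a \<in> A1 then f a else g a) v = dv A1 f v" by (rule dv_cong) simp
  moreover have "dv A2 (\<lambda>a. if a \<in> A1 then f a else g a) v = dv A2 g v" using assms(3) by (intro dv_cong) auto
  ultimately show ?thesis using dv_union[OF assms] by simp
qed

lemma series_comb:
  assumes s1: "sp tail head A1 s m" and s2: "sp tail head A2 m t" and dj: "A1 \<inter> A2 = {}"
    and vi: "verts A1 tail head \<inter> verts A2 tail head = {m}"
    and c1: "cons A1 (st_balance s m d) f" and c2: "cons A2 (st_balance m t d) g"
  shows "cons (A1 \<union> A2) (st_balance s t d) (\<lambda>a. if a \<in> A1 then f a else g a)"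
proof -
  note P1 = sp_props[OF s1] and P2 = sp_props[OF s2]
  have sn: "s \<notin> verts A2 tail head" and tn: "t \<notin> verts A1 tail head" using series_out[OF s1 s2 vi] by simp_all
  show ?thesis unfolding cons_def verts_union
  proof
    fix v assume v: "v \<in> verts A1 tail head \<union> verts A2 tail head"
    have e: "dv (A1 \<union> A2) (\<lambda>a. if a \<in> A1 then f a else g a) v = dv A1 f v + dv A2 g v"
      using dv_comb P1 P2 dj by blast
    consider "v = m" | "v \<in> verts A1 tail head" "v \<noteq> m" | "v \<in> verts A2 tail head" "v \<noteq> m"
      using v by blast
    then show "dv (A1 \<union> A2) (\<lambda>a. if a \<in> A1 then f a else g a) v = st_balance s t d v"
    proof cases
      case 1 then show ?thesis using e c1 c2 P1 P2 sn tn unfolding cons_def by (auto simp: st_balance_def)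
    next
      case 2
      then have "v \<notin> verts A2 tail head" using vi by blast
      then show ?thesis using 2 e c1 dv_notin[of v A2 g] P1 P2 sn tn unfolding cons_def
        by (auto simp: st_balance_def)
    next
      case 3
      then have "v \<notin> verts A1 tail head" using vi by blast
      then show ?thesis using 3 e c2 dv_notin[of v A1 f] P1 P2 sn tn unfolding cons_def
        by (auto simp: st_balance_def)
    qed
  qed
qed

lemma parallel_comb:
  assumes s1: "sp tail head A1 s t" and s2: "sp tail head A2 s t" and dj: "A1 \<inter> A2 = {}"
    and vi: "verts A1 tail head \<inter> verts A2 tail head = {s, t}"
    and c1: "cons A1 (st_balance s t x) f" and c2: "cons A2 (st_balance s t y) g"
  shows "cons (A1 \<union> A2) (st_balance s t (x + y)) (\<lambda>a. if a \<in> A1 then f a else g a)"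
proof -
  note P1 = sp_props[OF s1] and P2 = sp_props[OF s2]
  show ?thesis unfolding cons_def verts_union
  proof
    fix v assume v: "v \<in> verts A1 tail head \<union> verts A2 tail head"
    have e: "dv (A1 \<union> A2) (\<lambda>a. if a \<in> A1 then f a else g a) v = dv A1 f v + dv A2 g v"
      using dv_comb P1 P2 dj by blast
    consider "v = s \<or> v = t" | "v \<in> verts A1 tail head" "v \<noteq> s" "v \<noteq> t"
      | "v \<in> verts A2 tail head" "v \<noteq> s" "v \<noteq> t"
      using v by blast
    then show "dv (A1 \<union> A2) (\<lambda>a. if a \<in> A1 then f a else g a) v = st_balance s t (x + y) v"
    proof cases
      case 1 then show ?thesis using e c1 c2 P1 P2 unfolding cons_def by (auto simp: st_balance_def)
    next
      case 2
      then have "v \<notin> verts A2 tail head" using vi by blast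
      then show ?thesis using 2 e c1 dv_notin[of v A2 g] unfolding cons_def
        by (auto simp: st_balance_def)
    next
      case 3
      then have "v \<notin> verts A1 tail head" using vi by blast
      then show ?thesis using 3 e c2 dv_notin[of v A1 f] unfolding cons_def
        by (auto simp: st_balance_def)
    qed
  qed
qed

definition ind :: "'e set \<Rightarrow> 'e \<Rightarrow> nat" where "ind P a = (if a \<in> P then 1 else 0)"

definition dd :: "('e \<Rightarrow> nat) \<Rightarrow> ('e \<Rightarrow> nat) \<Rightarrow> 'e set \<Rightarrow> nat" where
  "dd f g A = (\<Sum>a\<in>A. (f a - g a) + (g a - f a))"

definition bnd :: "'e set \<Rightarrow> ('e \<Rightarrow> nat) \<Rightarrow> ('e \<Rightarrow> nat) \<Rightarrow> ('e \<Rightarrow> nat) \<Rightarrow> bool" where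
  "bnd A f1 f2 g \<longleftrightarrow> (\<forall>a\<in>A. min (f1 a) (f2 a) \<le> g a \<and> g a \<le> max (f1 a) (f2 a))"

lemma single_cons:
  assumes "tail a = s" "head a = t" "s \<noteq> t"
  shows "cons {a} (st_balance s t d) f \<longleftrightarrow> f a = d"
proof -
  have vs: "verts {a} tail head = {s, t}" using assms by (auto simp: verts_def)
  have e1: "{x\<in>{a}. tail x = s} = {a}" "{x\<in>{a}. head x = s} = {}"
    "{x\<in>{a}. tail x = t} = {}" "{x\<in>{a}. head x = t} = {a}" using assms by auto
  have "dv {a} f s = int (f a)" "dv {a} f t = - int (f a)" unfolding dv_def e1 by simp_all
  then show ?thesis unfolding cons_def vs using assms(3) by (auto simp: st_balance_def)
qed

lemma zero_cons: "(\<And>a. a \<in> A \<Longrightarrow> f a = 0) \<Longrightarrow> cons A (st_balance s t 0) f"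
proof -
  assume z: "\<And>a. a \<in> A \<Longrightarrow> f a = 0"
  have "dv A f v = dv A (\<lambda>_. 0) v" for v by (rule dv_cong) (simp add: z)
  then show ?thesis unfolding cons_def by (simp add: dv_def st_balance_def)
qed

lemma extend:
  assumes s1: "sp tail head A1 s t" and s2: "sp tail head A2 s t" and dj: "A1 \<inter> A2 = {}"
    and vi: "verts A1 tail head \<inter> verts A2 tail head = {s, t}"
    and PA: "P \<subseteq> A1" and c: "cons A1 (st_balance s t 1) (ind P)"
  shows "cons (A1 \<union> A2) (st_balance s t 1) (ind P)"
proof -
  have "cons A2 (st_balance s t 0) (ind P)" using PA dj by (intro zero_cons) (auto simp: ind_def)
  from parallel_comb[OF s1 s2 dj vi c this] show ?thesis by simp
qed

lemma path_lemma:
  assumes "sp tail head A s t"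
  shows "cons A (st_balance s t p1) f1 \<Longrightarrow> cons A (st_balance s t p2) f2 \<Longrightarrow> p2 < p1 \<Longrightarrow>
    \<exists>P\<subseteq>A. cons A (st_balance s t 1) (ind P) \<and> (\<forall>a\<in>P. f2 a < f1 a)"
  using assms
proof (induction arbitrary: p1 p2 rule: sp.induct)
  case (single a s t)
  then have "f1 a = p1" "f2 a = p2" using single_cons by blast+
  moreover have "cons {a} (st_balance s t 1) (ind {a})" using single_cons[OF single.hyps] by (simp add: ind_def)
  ultimately show ?case using single by auto
next
  case (series A1 s m A2 t)
  note R1 = series_restrict[OF series.hyps series.prems(1)]
  note R2 = series_restrict[OF series.hyps series.prems(2)]
  obtain P1 where P1: "P1 \<subseteq> A1" "cons A1 (st_balance s m 1) (ind P1)" "\<forall>a\<in>P1. f2 a < f1 a"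
    using series.IH(1)[OF R1[THEN conjunct1] R2[THEN conjunct1] series.prems(3)] by blast
  obtain P2 where P2: "P2 \<subseteq> A2" "cons A2 (st_balance m t 1) (ind P2)" "\<forall>a\<in>P2. f2 a < f1 a"
    using series.IH(2)[OF R1[THEN conjunct2] R2[THEN conjunct2] series.prems(3)] by blast
  have cc: "cons (A1 \<union> A2) (st_balance s t 1) (\<lambda>a. if a \<in> A1 then ind P1 a else ind P2 a)"
    using series_comb[OF series.hyps P1(2) P2(2)] .
  have eq: "\<And>a. a \<in> A1 \<union> A2 \<Longrightarrow> (if a \<in> A1 then ind P1 a else ind P2 a) = ind (P1 \<union> P2) a"
    using P1(1) P2(1) series.hyps(3) by (auto simp: ind_def)
  have "cons (A1 \<union> A2) (st_balance s t 1) (ind (P1 \<union> P2))" using cons_cong[of "A1 \<union> A2" "\<lambda>a. if a \<in> A1 then ind P1 a else ind P2 a" "ind (P1 \<union> P2)" "st_balance s t 1", OF eq] cc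
    by (rule iffD1)
  then show ?case using P1(1,3) P2(1,3) by (intro exI[of _ "P1 \<union> P2"]) auto
next
  case (parallel A1 s t A2)
  note R1 = parallel_restrict[OF parallel.hyps parallel.prems(1)]
  note R2 = parallel_restrict[OF parallel.hyps parallel.prems(2)]
  have "outf A1 f2 s < outf A1 f1 s \<or> outf A2 f2 s < outf A2 f1 s" using R1 R2 parallel.prems(3) by linarith
  then show ?case
  proof
    assume lt: "outf A1 f2 s < outf A1 f1 s"
    obtain P where P: "P \<subseteq> A1" "cons A1 (st_balance s t 1) (ind P)" "\<forall>a\<in>P. f2 a < f1 a"
      using parallel.IH(1)[OF R1[THEN conjunct1] R2[THEN conjunct1] lt] by blast
    have "cons (A1 \<union> A2) (st_balance s t 1) (ind P)" using extend[OF parallel.hyps P(1,2)] .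
    then show ?case using P by blast
  next
    assume lt: "outf A2 f2 s < outf A2 f1 s"
    obtain P where P: "P \<subseteq> A2" "cons A2 (st_balance s t 1) (ind P)" "\<forall>a\<in>P. f2 a < f1 a"
      using parallel.IH(2)[OF R1[THEN conjunct2, THEN conjunct1] R2[THEN conjunct2, THEN conjunct1] lt] by blast
    have "verts A2 tail head \<inter> verts A1 tail head = {s, t}" using parallel.hyps(4) by blast
    then have "cons (A2 \<union> A1) (st_balance s t 1) (ind P)"
      using extend[OF parallel.hyps(2,1) _ _ P(1,2)] parallel.hyps(3) by blast
    then show ?case using P by (simp add: Un_commute) blast
  qed
qed

lemma cost_lin:
  assumes "finite A" "\<And>a. a \<in> A \<Longrightarrow> int (F a) = int (f a) + int (g a) - int (h a)"
  shows "int (flow_cost A c F) = int (flow_cost A c f) + int (flow_cost A c g) - int (flow_cost A c h)"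
proof -
  have "\<And>a. a \<in> A \<Longrightarrow> int (c a * F a) = int (c a * f a) + int (c a * g a) - int (c a * h a)"
  proof -
    fix a assume "a \<in> A"
    then have e: "int (F a) = int (f a) + int (g a) - int (h a)" by (rule assms(2))
    show "int (c a * F a) = int (c a * f a) + int (c a * g a) - int (c a * h a)"
      unfolding of_nat_mult e by (simp add: algebra_simps)
  qed
  then have "(\<Sum>a\<in>A. int (c a * F a)) = (\<Sum>a\<in>A. int (c a * f a) + int (c a * g a) - int (c a * h a))"
    by (rule sum.cong[OF refl])
  then show ?thesis unfolding flow_cost_def of_nat_sum by (simp add: sum.distrib sum_subtractf)
qed

lemma bnd_refl1: "bnd A f1 f2 f1" and bnd_refl2: "bnd A f1 f2 f2" by (auto simp: bnd_def)

lemma reroute: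
  assumes fin: "finite A" and sA: "s \<in> verts A tail head" and stn: "s \<noteq> t"
    and PA: "P \<subseteq> A" and QA: "Q \<subseteq> A" and PQ: "P \<inter> Q = {}"
    and cP: "cons A (st_balance s t 1) (ind P)" and cQ: "cons A (st_balance s t 1) (ind Q)"
    and lP: "\<forall>a\<in>P. f2 a < f1 a" and lQ: "\<forall>a\<in>Q. f1 a < f2 a"
    and c1: "cons A b1 f1" and c2: "cons A b2 f2"
  shows "\<exists>f1' f2'. cons A b1 f1' \<and> cons A b2 f2' \<and> dd f1' f2' A < dd f1 f2 A \<and>
     bnd A f1 f2 f1' \<and> bnd A f1 f2 f2' \<and> flow_cost A c f1' \<le> flow_cost A c f1 \<and>
     flow_cost A c f2' \<le> flow_cost A c f2"
proof -
  have "P \<noteq> {}"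
  proof
    assume "P = {}"
    then have "dv A (ind P) s = dv A (\<lambda>_. 0) s" by (intro dv_cong) (simp add: ind_def)
    moreover have "dv A (ind P) s = 1" using cP sA unfolding cons_def by (simp add: st_balance_def)
    ultimately show False by (simp add: dv_def)
  qed
  then obtain p where p: "p \<in> P" by blast
  have dP: "\<And>v. v \<in> verts A tail head \<Longrightarrow> dv A (ind P) v = dv A (ind Q) v"
    using cP cQ unfolding cons_def by simp
  show ?thesis
  proof (cases "flow_cost A c (ind Q) \<le> flow_cost A c (ind P)")
    case True
    define g where "g = (\<lambda>a. f1 a + ind Q a - ind P a)"
    have gi: "\<And>a. a \<in> A \<Longrightarrow> int (g a) = int (f1 a) + int (ind Q a) - int (ind P a)"
      using lP by (fastforce simp: g_def ind_def)
    have "cons A b1 g" unfolding cons_def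
    proof
      fix v assume v: "v \<in> verts A tail head"
      have "dv A g v = dv A f1 v + dv A (ind Q) v - dv A (ind P) v" using dv_lin[where F=g and f=f1 and g="ind Q" and h="ind P", OF fin gi] .
      then show "dv A g v = b1 v" using dP[OF v] c1 v unfolding cons_def by simp
    qed
    moreover have "flow_cost A c g \<le> flow_cost A c f1" using cost_lin[where F=g and f=f1 and g="ind Q" and h="ind P" and c=c, OF fin gi] True by linarith
    moreover have pa: "\<And>a. a \<in> A \<Longrightarrow> (g a - f2 a) + (f2 a - g a) \<le> (f1 a - f2 a) + (f2 a - f1 a)
        \<and> min (f1 a) (f2 a) \<le> g a \<and> g a \<le> max (f1 a) (f2 a)"
    proof -
      fix a assume "a \<in> A"
      consider "a \<in> P" | "a \<in> Q" | "a \<notin> P" "a \<notin> Q" by blast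
      then show "(g a - f2 a) + (f2 a - g a) \<le> (f1 a - f2 a) + (f2 a - f1 a)
        \<and> min (f1 a) (f2 a) \<le> g a \<and> g a \<le> max (f1 a) (f2 a)"
      proof cases
        case 1 then have "a \<notin> Q" using PQ by blast
        then show ?thesis using 1 lP by (auto simp: g_def ind_def)
      next
        case 2 then have "a \<notin> P" using PQ by blast
        then show ?thesis using 2 lQ by (auto simp: g_def ind_def)
      qed (auto simp: g_def ind_def)
    qed
    moreover have "dd g f2 A < dd f1 f2 A" unfolding dd_def
    proof (rule sum_strict_mono_ex1[OF fin])
      show "\<forall>a\<in>A. g a - f2 a + (f2 a - g a) \<le> f1 a - f2 a + (f2 a - f1 a)" using pa by blast
      have "p \<notin> Q" using p PQ by blast
      then have "g p - f2 p + (f2 p - g p) < f1 p - f2 p + (f2 p - f1 p)"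
        using p lP by (auto simp: g_def ind_def)
      then show "\<exists>a\<in>A. g a - f2 a + (f2 a - g a) < f1 a - f2 a + (f2 a - f1 a)" using p PA by blast
    qed
    moreover have "bnd A f1 f2 g" using pa by (simp add: bnd_def)
    ultimately show ?thesis using c2 bnd_refl2 by blast
  next
    case False
    define g where "g = (\<lambda>a. f2 a + ind P a - ind Q a)"
    have gi: "\<And>a. a \<in> A \<Longrightarrow> int (g a) = int (f2 a) + int (ind P a) - int (ind Q a)"
      using lQ by (fastforce simp: g_def ind_def)
    have "cons A b2 g" unfolding cons_def
    proof
      fix v assume v: "v \<in> verts A tail head"
      have "dv A g v = dv A f2 v + dv A (ind P) v - dv A (ind Q) v" using dv_lin[where F=g and f=f2 and g="ind P" and h="ind Q", OF fin gi] .
      then show "dv A g v = b2 v" using dP[OF v] c2 v unfolding cons_def by simp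
    qed
    moreover have "flow_cost A c g \<le> flow_cost A c f2" using cost_lin[where F=g and f=f2 and g="ind P" and h="ind Q" and c=c, OF fin gi] False by linarith
    moreover have pa: "\<And>a. a \<in> A \<Longrightarrow> (f1 a - g a) + (g a - f1 a) \<le> (f1 a - f2 a) + (f2 a - f1 a)
        \<and> min (f1 a) (f2 a) \<le> g a \<and> g a \<le> max (f1 a) (f2 a)"
    proof -
      fix a assume "a \<in> A"
      consider "a \<in> P" | "a \<in> Q" | "a \<notin> P" "a \<notin> Q" by blast
      then show "(f1 a - g a) + (g a - f1 a) \<le> (f1 a - f2 a) + (f2 a - f1 a)
        \<and> min (f1 a) (f2 a) \<le> g a \<and> g a \<le> max (f1 a) (f2 a)"
      proof cases
        case 1 then have "a \<notin> Q" using PQ by blast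
        then show ?thesis using 1 lP by (auto simp: g_def ind_def)
      next
        case 2 then have "a \<notin> P" using PQ by blast
        then show ?thesis using 2 lQ by (auto simp: g_def ind_def)
      qed (auto simp: g_def ind_def)
    qed
    moreover have "dd f1 g A < dd f1 f2 A" unfolding dd_def
    proof (rule sum_strict_mono_ex1[OF fin])
      show "\<forall>a\<in>A. f1 a - g a + (g a - f1 a) \<le> f1 a - f2 a + (f2 a - f1 a)" using pa by blast
      have "p \<notin> Q" using p PQ by blast
      then have "f1 p - g p + (g p - f1 p) < f1 p - f2 p + (f2 p - f1 p)"
        using p lP by (auto simp: g_def ind_def)
      then show "\<exists>a\<in>A. f1 a - g a + (g a - f1 a) < f1 a - f2 a + (f2 a - f1 a)" using p PA by blast
    qed
    moreover have "bnd A f1 f2 g" using pa by (simp add: bnd_def)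
    ultimately show ?thesis using c1 bnd_refl1 by blast
  qed
qed
lemma bnd_trans:
  assumes "bnd A f1 f2 h1" "bnd A f1 f2 h2" "bnd A h1 h2 g" shows "bnd A f1 f2 g"
  unfolding bnd_def
proof
  fix a assume a: "a \<in> A"
  have "min (f1 a) (f2 a) \<le> h1 a" "h1 a \<le> max (f1 a) (f2 a)" "min (f1 a) (f2 a) \<le> h2 a" "h2 a \<le> max (f1 a) (f2 a)"
    "min (h1 a) (h2 a) \<le> g a" "g a \<le> max (h1 a) (h2 a)" using assms a unfolding bnd_def by auto
  then show "min (f1 a) (f2 a) \<le> g a \<and> g a \<le> max (f1 a) (f2 a)" by (simp add: min_def max_def split: if_splits)
qed

lemma cost_union: "finite A1 \<Longrightarrow> finite A2 \<Longrightarrow> A1 \<inter> A2 = {} \<Longrightarrow>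
  flow_cost (A1 \<union> A2) c (\<lambda>a. if a \<in> A1 then f a else g a) = flow_cost A1 c f + flow_cost A2 c g"
  unfolding flow_cost_def
  by (subst sum.union_disjoint) (auto intro!: arg_cong2[where f="(+)"] sum.cong)

lemma bnd_union: "A1 \<inter> A2 = {} \<Longrightarrow> bnd A1 f1 f2 g \<Longrightarrow> bnd A2 f1 f2 h \<Longrightarrow>
   bnd (A1 \<union> A2) f1 f2 (\<lambda>a. if a \<in> A1 then g a else h a)"
  unfolding bnd_def by auto

definition goodQ where
  "goodQ A s t c d1 d2 f1 f2 \<longleftrightarrow> (\<exists>g1 g2. cons A (st_balance s t d1) g1 \<and> cons A (st_balance s t d2) g2 \<and>
      (\<forall>a\<in>A. g1 a \<le> g2 a) \<and> bnd A f1 f2 g1 \<and> bnd A f1 f2 g2 \<and>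
      flow_cost A c g1 \<le> flow_cost A c f1 \<and> flow_cost A c g2 \<le> flow_cost A c f2)"

lemma goodQ_union:
  assumes fin: "finite A1" "finite A2" and dj: "A1 \<inter> A2 = {}"
    and G1: "goodQ A1 s1 t1 c x1 x2 f1 f2" and G2: "goodQ A2 s2 t2 c y1 y2 f1 f2"
    and comb1: "\<And>g h. cons A1 (st_balance s1 t1 x1) g \<Longrightarrow> cons A2 (st_balance s2 t2 y1) h \<Longrightarrow>
       cons (A1 \<union> A2) (st_balance s t d1) (\<lambda>a. if a \<in> A1 then g a else h a)"
    and comb2: "\<And>g h. cons A1 (st_balance s1 t1 x2) g \<Longrightarrow> cons A2 (st_balance s2 t2 y2) h \<Longrightarrow>
       cons (A1 \<union> A2) (st_balance s t d2) (\<lambda>a. if a \<in> A1 then g a else h a)"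
  shows "goodQ (A1 \<union> A2) s t c d1 d2 f1 f2"
proof -
  obtain g1 g2 where g: "cons A1 (st_balance s1 t1 x1) g1" "cons A1 (st_balance s1 t1 x2) g2"
      "\<forall>a\<in>A1. g1 a \<le> g2 a" "bnd A1 f1 f2 g1" "bnd A1 f1 f2 g2"
      "flow_cost A1 c g1 \<le> flow_cost A1 c f1" "flow_cost A1 c g2 \<le> flow_cost A1 c f2"
    using G1 unfolding goodQ_def by blast
  obtain h1 h2 where h: "cons A2 (st_balance s2 t2 y1) h1" "cons A2 (st_balance s2 t2 y2) h2"
      "\<forall>a\<in>A2. h1 a \<le> h2 a" "bnd A2 f1 f2 h1" "bnd A2 f1 f2 h2"
      "flow_cost A2 c h1 \<le> flow_cost A2 c f1" "flow_cost A2 c h2 \<le> flow_cost A2 c f2"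
    using G2 unfolding goodQ_def by blast
  have e1: "(\<lambda>a. if a \<in> A1 then f1 a else f1 a) = f1" "(\<lambda>a. if a \<in> A1 then f2 a else f2 a) = f2" by auto
  have cf1: "flow_cost (A1 \<union> A2) c f1 = flow_cost A1 c f1 + flow_cost A2 c f1"
    using cost_union[OF fin dj, of c f1 f1] e1 by simp
  have cf2: "flow_cost (A1 \<union> A2) c f2 = flow_cost A1 c f2 + flow_cost A2 c f2"
    using cost_union[OF fin dj, of c f2 f2] e1 by simp
  show ?thesis unfolding goodQ_def
    apply (rule exI[of _ "\<lambda>a. if a \<in> A1 then g1 a else h1 a"], rule exI[of _ "\<lambda>a. if a \<in> A1 then g2 a else h2 a"])
    using comb1[OF g(1) h(1)] comb2[OF g(2) h(2)] h g bnd_union[OF dj] cost_union[OF fin dj] cf1 cf2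
    by auto
qed

lemma mainQ:
  assumes "sp tail head A s t"
  shows "d1 \<le> d2 \<Longrightarrow> cons A (st_balance s t d1) f1 \<Longrightarrow> cons A (st_balance s t d2) f2 \<Longrightarrow>
    goodQ A s t c d1 d2 f1 f2"
  using assms
proof (induction arbitrary: d1 d2 f1 f2 rule: sp.induct)
  case (single a s t)
  then have "f1 a = d1" "f2 a = d2" using single_cons by blast+
  then show ?case unfolding goodQ_def
    by (intro exI[of _ f1] exI[of _ f2] conjI) (use single bnd_refl1 bnd_refl2 in auto)
next
  case (series A1 s m A2 t)
  note P1 = sp_props[OF series.hyps(1)] and P2 = sp_props[OF series.hyps(2)]
  note R1 = series_restrict[OF series.hyps series.prems(2)]
  note R2 = series_restrict[OF series.hyps series.prems(3)]
  have G1: "goodQ A1 s m c d1 d2 f1 f2" using series.IH(1) R1 R2 series.prems(1) by blast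
  have G2: "goodQ A2 m t c d1 d2 f1 f2" using series.IH(2) R1 R2 series.prems(1) by blast
  show ?case
    by (rule goodQ_union[OF _ _ series.hyps(3) G1 G2])
       (use P1 P2 series_comb[OF series.hyps] in auto)
next
  case (parallel A1 s t A2)
  note P1 = sp_props[OF parallel.hyps(1)] and P2 = sp_props[OF parallel.hyps(2)]
  have fin: "finite (A1 \<union> A2)" using P1 P2 by simp
  have sV: "s \<in> verts (A1 \<union> A2) tail head" using P1 by (simp add: verts_union)
  have vi': "verts A2 tail head \<inter> verts A1 tail head = {s, t}" using parallel.hyps(4) by blast
  have dj': "A2 \<inter> A1 = {}" using parallel.hyps(3) by blast
  have U: "A2 \<union> A1 = A1 \<union> A2" by blast
  have main: "\<And>f1 f2. dd f1 f2 (A1 \<union> A2) = n \<Longrightarrow> cons (A1 \<union> A2) (st_balance s t d1) f1 \<Longrightarrow>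
     cons (A1 \<union> A2) (st_balance s t d2) f2 \<Longrightarrow> goodQ (A1 \<union> A2) s t c d1 d2 f1 f2" for n
  proof (induction n rule: less_induct)
    case (less n f1 f2)
    note R1 = parallel_restrict[OF parallel.hyps less.prems(2)]
    note R2 = parallel_restrict[OF parallel.hyps less.prems(3)]
    define x1 where "x1 = outf A1 f1 s"
    define x2 where "x2 = outf A1 f2 s"
    define y1 where "y1 = outf A2 f1 s"
    define y2 where "y2 = outf A2 f2 s"
    have sums: "x1 + y1 = d1" "x2 + y2 = d2" using R1 R2 by (simp_all add: x1_def x2_def y1_def y2_def)
    note R1' = R1[folded x1_def y1_def] and R2' = R2[folded x2_def y2_def]
    have stn: "s \<noteq> t" using P1 by simp
    have reroute': "goodQ (A1 \<union> A2) s t c d1 d2 f1 f2"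
      if PQ: "P \<subseteq> A1 \<union> A2" "Q \<subseteq> A1 \<union> A2" "P \<inter> Q = {}"
        "cons (A1 \<union> A2) (st_balance s t 1) (ind P)" "cons (A1 \<union> A2) (st_balance s t 1) (ind Q)"
        "\<forall>a\<in>P. f2 a < f1 a" "\<forall>a\<in>Q. f1 a < f2 a" for P Q
    proof -
      obtain f1' f2' where F: "cons (A1 \<union> A2) (st_balance s t d1) f1'" "cons (A1 \<union> A2) (st_balance s t d2) f2'"
        "dd f1' f2' (A1 \<union> A2) < dd f1 f2 (A1 \<union> A2)" "bnd (A1 \<union> A2) f1 f2 f1'" "bnd (A1 \<union> A2) f1 f2 f2'"
        "flow_cost (A1 \<union> A2) c f1' \<le> flow_cost (A1 \<union> A2) c f1" "flow_cost (A1 \<union> A2) c f2' \<le> flow_cost (A1 \<union> A2) c f2"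
        using reroute[OF fin sV stn PQ less.prems(2,3), where c=c] by blast
      have lt: "dd f1' f2' (A1 \<union> A2) < n" using F(3) less.prems(1) by simp
      have "goodQ (A1 \<union> A2) s t c d1 d2 f1' f2'" using less.IH[OF lt refl F(1,2)] .
      then obtain g1 g2 where g: "cons (A1 \<union> A2) (st_balance s t d1) g1" "cons (A1 \<union> A2) (st_balance s t d2) g2"
        "\<forall>a\<in>A1 \<union> A2. g1 a \<le> g2 a" "bnd (A1 \<union> A2) f1' f2' g1" "bnd (A1 \<union> A2) f1' f2' g2"
        "flow_cost (A1 \<union> A2) c g1 \<le> flow_cost (A1 \<union> A2) c f1'"
        "flow_cost (A1 \<union> A2) c g2 \<le> flow_cost (A1 \<union> A2) c f2'"
        unfolding goodQ_def by blast
      have "bnd (A1 \<union> A2) f1 f2 g1" "bnd (A1 \<union> A2) f1 f2 g2"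
        using bnd_trans[OF F(4,5) g(4)] bnd_trans[OF F(4,5) g(5)] .
      moreover have "flow_cost (A1 \<union> A2) c g1 \<le> flow_cost (A1 \<union> A2) c f1"
        "flow_cost (A1 \<union> A2) c g2 \<le> flow_cost (A1 \<union> A2) c f2" using g(6,7) F(6,7) by simp_all
      ultimately show ?thesis unfolding goodQ_def using g(1,2,3) by blast
    qed
    consider "x1 \<le> x2" "y1 \<le> y2" | "x2 < x1" "y1 < y2" | "y2 < y1" "x1 < x2"
      using sums parallel.prems(1) by linarith
    then show ?case
    proof cases
      case 1
      have G1: "goodQ A1 s t c x1 x2 f1 f2" using parallel.IH(1)[OF 1(1) R1'[THEN conjunct1] R2'[THEN conjunct1]] .
      have G2: "goodQ A2 s t c y1 y2 f1 f2"
        using parallel.IH(2)[OF 1(2) R1'[THEN conjunct2, THEN conjunct1] R2'[THEN conjunct2, THEN conjunct1]] .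
      show ?thesis
        by (rule goodQ_union[OF _ _ parallel.hyps(3) G1 G2])
           (use P1 P2 parallel_comb[OF parallel.hyps, of x1 _ y1] parallel_comb[OF parallel.hyps, of x2 _ y2] sums in auto)
    next
      case 2
      obtain P where P: "P \<subseteq> A1" "cons A1 (st_balance s t 1) (ind P)" "\<forall>a\<in>P. f2 a < f1 a"
        using path_lemma[OF parallel.hyps(1) R1'[THEN conjunct1] R2'[THEN conjunct1] 2(1)] by blast
      obtain Q where Q: "Q \<subseteq> A2" "cons A2 (st_balance s t 1) (ind Q)" "\<forall>a\<in>Q. f1 a < f2 a"
        using path_lemma[OF parallel.hyps(2) R2'[THEN conjunct2, THEN conjunct1] R1'[THEN conjunct2, THEN conjunct1] 2(2)] by blast
      have cP: "cons (A1 \<union> A2) (st_balance s t 1) (ind P)" using extend[OF parallel.hyps P(1,2)] .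
      have cQ: "cons (A1 \<union> A2) (st_balance s t 1) (ind Q)"
        using extend[OF parallel.hyps(2,1) dj' vi' Q(1,2)] U by simp
      show ?thesis using reroute'[OF _ _ _ cP cQ P(3) Q(3)] P(1) Q(1) parallel.hyps(3) by blast
    next
      case 3
      obtain P where P: "P \<subseteq> A2" "cons A2 (st_balance s t 1) (ind P)" "\<forall>a\<in>P. f2 a < f1 a"
        using path_lemma[OF parallel.hyps(2) R1'[THEN conjunct2, THEN conjunct1] R2'[THEN conjunct2, THEN conjunct1] 3(1)] by blast
      obtain Q where Q: "Q \<subseteq> A1" "cons A1 (st_balance s t 1) (ind Q)" "\<forall>a\<in>Q. f1 a < f2 a"
        using path_lemma[OF parallel.hyps(1) R2'[THEN conjunct1] R1'[THEN conjunct1] 3(2)] by blast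
      have cQ: "cons (A1 \<union> A2) (st_balance s t 1) (ind Q)" using extend[OF parallel.hyps Q(1,2)] .
      have cP: "cons (A1 \<union> A2) (st_balance s t 1) (ind P)"
        using extend[OF parallel.hyps(2,1) dj' vi' P(1,2)] U by simp
      show ?thesis using reroute'[OF _ _ _ cP cQ P(3) Q(3)] P(1) Q(1) parallel.hyps(3) by blast
    qed
  qed
  show ?case using main[OF refl parallel.prems(2,3)] .
qed


end

theorem mainTheorem16:
  fixes A Afix :: "'e set" and tail head :: "'e \<Rightarrow> 'v" and s t :: 'v
    and u c :: "'e \<Rightarrow> nat" and d1 d2 :: nat
  assumes "sp tail head A s t"
    and "Afix \<subseteq> A"
    and "d1 \<le> d2"
    and "\<exists>f1 f2. robust_flow A Afix tail head u (st_balance s t d1) (st_balance s t d2) f1 f2"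
  shows "\<exists>f1 f2. optimal_robust_flow A Afix tail head u c (st_balance s t d1) (st_balance s t d2) f1 f2
                \<and> (\<forall>a\<in>A. f1 a \<le> f2 a)"
proof -
  let ?R = "robust_flow A Afix tail head u (st_balance s t d1) (st_balance s t d2)"
  define K where "K = {k. \<exists>g1 g2. ?R g1 g2 \<and> robust_cost A c g1 g2 = k}"
  obtain f1 f2 where "?R f1 f2" using assms(4) by blast
  then have "robust_cost A c f1 f2 \<in> K" unfolding K_def by blast
  then have "(LEAST k. k \<in> K) \<in> K" by (rule LeastI)
  then obtain h1 h2 where H: "?R h1 h2" "robust_cost A c h1 h2 = (LEAST k. k \<in> K)"
    unfolding K_def by blast
  have hopt: "robust_cost A c h1 h2 \<le> robust_cost A c g1 g2" if "?R g1 g2" for g1 g2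
  proof -
    have "robust_cost A c g1 g2 \<in> K" using that unfolding K_def by blast
    then show ?thesis unfolding H(2) by (rule Least_le)
  qed
  have F1: "is_flow A tail head u (st_balance s t d1) h1" and F2: "is_flow A tail head u (st_balance s t d2) h2"
    and fx: "\<forall>a\<in>Afix. h1 a = h2 a" using H(1) unfolding robust_flow_def by auto
  have "goodQ tail head A s t c d1 d2 h1 h2"
    using mainQ[OF assms(1) assms(3)] F1 F2 by (simp add: is_flow_cons)
  then obtain g1 g2 where G: "cons tail head A (st_balance s t d1) g1" "cons tail head A (st_balance s t d2) g2"
      "\<forall>a\<in>A. g1 a \<le> g2 a" "bnd A h1 h2 g1" "bnd A h1 h2 g2"
      "flow_cost A c g1 \<le> flow_cost A c h1" "flow_cost A c g2 \<le> flow_cost A c h2"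
    unfolding goodQ_def by blast
  have cap1: "\<forall>a\<in>A. h1 a \<le> u a" and cap2: "\<forall>a\<in>A. h2 a \<le> u a" using F1 F2 by (simp_all add: is_flow_cons)
  have capg: "\<forall>a\<in>A. g1 a \<le> u a \<and> g2 a \<le> u a"
  proof
    fix a assume a: "a \<in> A"
    then have "g1 a \<le> max (h1 a) (h2 a)" "g2 a \<le> max (h1 a) (h2 a)" using G(4,5) by (auto simp: bnd_def)
    then show "g1 a \<le> u a \<and> g2 a \<le> u a" using cap1 cap2 a by (auto simp: max_def split: if_splits)
  qed
  have fixg: "\<forall>a\<in>Afix. g1 a = g2 a"
  proof
    fix a assume a: "a \<in> Afix"
    then have aA: "a \<in> A" using assms(2) by blast
    have "min (h1 a) (h2 a) \<le> g1 a" "g1 a \<le> max (h1 a) (h2 a)"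
         "min (h1 a) (h2 a) \<le> g2 a" "g2 a \<le> max (h1 a) (h2 a)" using G(4,5) aA by (auto simp: bnd_def)
    then show "g1 a = g2 a" using fx a by simp
  qed
  have RG: "?R g1 g2" unfolding robust_flow_def using G(1,2) capg fixg by (simp add: is_flow_cons)
  have "robust_cost A c g1 g2 \<le> robust_cost A c h1 h2"
    using G(6,7) unfolding robust_cost_def by (rule max.mono)
  then have "optimal_robust_flow A Afix tail head u c (st_balance s t d1) (st_balance s t d2) g1 g2"
    unfolding optimal_robust_flow_def using RG hopt order_trans by blast
  then show ?thesis using G(3) by blast
qed

end
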